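(* For every integer $n\ge2$, the Mobius ladder $M_{2n}$ admits no extended irregular dominating set.
   Context: For $n\ge2$, the Mobius ladder $M_{2n}$ has vertex set $\{x_1,\dots,x_{2n}\}$ and edge set $\{\{x_i,x_{i+1}\}:1\le i\le 2n\}\cup\{\{x_i,x_{i+n}\}:1\le i\le n\}$, subscripts modulo $2n$. In a finite simple graph $\Gamma=(V,E)$ with distance $d$, a vertex $v$ carrying a non-negative integer label $\ell$ dominates (covers) exactly the vertices $u$ with $d(u,v)=\ell$; a vertex labeled $0$ dominates only itself. An extended irregular dominating set is a set $S\subseteq V$ with a labeling $\lambda:S\to\mathbb{Z}_{\ge0}$ with distinct labels on distinct vertices, such that every vertex of $V$ is dominated by some vertex of $S$; it is assumed that some vertex of $S$ has label $0$. *)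

theory Defs
  imports Main
begin

text \<open>A finite simple graph is given by a vertex set V and a symmetric irreflexive
adjacency relation adj (only its restriction to V matters).\<close>

inductive walk :: "('a \<Rightarrow> 'a \<Rightarrow> bool) \<Rightarrow> 'a set \<Rightarrow> 'a \<Rightarrow> 'a \<Rightarrow> nat \<Rightarrow> bool"
  for adj V where
  walk0: "u \<in> V \<Longrightarrow> walk adj V u u 0"
| walkS: "walk adj V u w k \<Longrightarrow> v \<in> V \<Longrightarrow> adj w v \<Longrightarrow> walk adj V u v (Suc k)"

definition graph_dist_eq :: "('a \<Rightarrow> 'a \<Rightarrow> bool) \<Rightarrow> 'a set \<Rightarrow> 'a \<Rightarrow> 'a \<Rightarrow> nat \<Rightarrow> bool" where
  "graph_dist_eq adj V u v k \<longleftrightarrow> walk adj V u v k \<and> (\<forall>j<k. \<not> walk adj V u v j)"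

definition ext_irr_dom_set ::
  "('a \<Rightarrow> 'a \<Rightarrow> bool) \<Rightarrow> 'a set \<Rightarrow> 'a set \<Rightarrow> ('a \<Rightarrow> nat) \<Rightarrow> bool" where
  "ext_irr_dom_set adj V S lam \<longleftrightarrow>
     S \<subseteq> V \<and> inj_on lam S \<and> (\<exists>s\<in>S. lam s = 0) \<and>
     (\<forall>u\<in>V. \<exists>v\<in>S. graph_dist_eq adj V u v (lam v))"

text \<open>Mobius ladder M_{2n}: vertices x_1..x_{2n} encoded as 0..2n-1 (x_i = i-1);
edges {i,i+1 mod 2n} and {i, i+n}.\<close>
definition mobius_V :: "nat \<Rightarrow> nat set" where
  "mobius_V n = {0..<2*n}"

definition mobius_adj :: "nat \<Rightarrow> nat \<Rightarrow> nat \<Rightarrow> bool" where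
  "mobius_adj n i j \<longleftrightarrow> i \<in> {0..<2*n} \<and> j \<in> {0..<2*n} \<and>
     (j = (i + 1) mod (2*n) \<or> i = (j + 1) mod (2*n) \<or> j = i + n \<or> i = j + n)"

end

theory Submission
  imports Defs
begin

definition cc :: "nat \<Rightarrow> nat \<Rightarrow> nat" where "cc n z = min z (2*n - z)"
definition ff :: "nat \<Rightarrow> nat \<Rightarrow> nat" where "ff n z = min (cc n z) (n + 1 - cc n z)"
definition dd :: "nat \<Rightarrow> nat \<Rightarrow> nat \<Rightarrow> nat" where
  "dd n x y = (if x \<le> y then y - x else y + 2*n - x)"

definition sc :: "nat \<Rightarrow> nat \<Rightarrow> nat" where "sc n x = (if x + 1 = 2*n then 0 else x + 1)"
definition pc :: "nat \<Rightarrow> nat \<Rightarrow> nat" where "pc n x = (if x = 0 then 2*n - 1 else x - 1)"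
definition op :: "nat \<Rightarrow> nat \<Rightarrow> nat" where "op n x = (if x < n then x + n else x - n)"

lemma sc_lt: "x < 2*n \<Longrightarrow> sc n x < 2*n" unfolding sc_def by auto
lemma pc_lt: "x < 2*n \<Longrightarrow> pc n x < 2*n" unfolding pc_def by auto
lemma op_lt: "x < 2*n \<Longrightarrow> op n x < 2*n" unfolding op_def by auto

lemma ff_sc: "z < 2*n \<Longrightarrow> ff n (sc n z) \<le> ff n z + 1"
  unfolding ff_def cc_def min_def sc_def by (auto split: if_splits)
lemma ff_pc: "z < 2*n \<Longrightarrow> ff n (pc n z) \<le> ff n z + 1"
  unfolding ff_def cc_def min_def pc_def by (auto split: if_splits)
lemma ff_op: "z < 2*n \<Longrightarrow> ff n (op n z) \<le> ff n z + 1"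
  unfolding ff_def cc_def min_def op_def by (auto split: if_splits)

lemma dd_sc: "u < 2*n \<Longrightarrow> w < 2*n \<Longrightarrow> dd n u (sc n w) = sc n (dd n u w)"
  unfolding dd_def sc_def by (auto split: if_splits)
lemma dd_pc: "u < 2*n \<Longrightarrow> w < 2*n \<Longrightarrow> dd n u (pc n w) = pc n (dd n u w)"
  unfolding dd_def pc_def by (auto split: if_splits)
lemma dd_op: "u < 2*n \<Longrightarrow> w < 2*n \<Longrightarrow> dd n u (op n w) = op n (dd n u w)"
  unfolding dd_def op_def by (auto split: if_splits)
lemma dd_sc1: "u < 2*n \<Longrightarrow> w < 2*n \<Longrightarrow> dd n (sc n w) u = pc n (dd n w u)"
  unfolding dd_def sc_def pc_def by (auto split: if_splits)
lemma dd_pc1: "u < 2*n \<Longrightarrow> w < 2*n \<Longrightarrow> dd n (pc n w) u = sc n (dd n w u)"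
  unfolding dd_def sc_def pc_def by (auto split: if_splits)
lemma dd_op1: "u < 2*n \<Longrightarrow> w < 2*n \<Longrightarrow> dd n (op n w) u = op n (dd n w u)"
  unfolding dd_def op_def by (auto split: if_splits)

lemma cc_lo: "z \<le> n \<Longrightarrow> cc n z = z" unfolding cc_def by simp
lemma cc_hi: "n \<le> z \<Longrightarrow> cc n z = 2*n - z" unfolding cc_def by simp
lemma ff_lo: "2 * cc n z \<le> n + 1 \<Longrightarrow> ff n z = cc n z" unfolding ff_def by simp
lemma ff_hi: "2 * cc n z \<ge> n + 1 \<Longrightarrow> ff n z = n + 1 - cc n z" unfolding ff_def by simp

lemma step_ex:
  assumes "z < 2*n" "ff n z = Suc k"
  shows "ff n (pc n z) = k \<or> ff n (sc n z) = k \<or> ff n (op n z) = k"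
proof -
  consider (a) "z \<le> n" "2*z \<le> n+1" | (b) "z \<ge> n" "2*(2*n-z) \<le> n+1" | (c) "z \<le> n" "2*z \<ge> n+1" | (d) "z \<ge> n" "2*(2*n-z) \<ge> n+1"
    by linarith
  then show ?thesis
  proof cases
    case a
    then have "ff n z = z" using cc_lo ff_lo by simp
    then have z: "z = Suc k" using assms by simp
    then have "pc n z = k" unfolding pc_def by simp
    moreover have "ff n k = k" using a z cc_lo[of k n] ff_lo[of n k] by simp
    ultimately show ?thesis by simp
  next
    case b
    then have "ff n z = 2*n - z" using cc_hi ff_lo by simp
    then have z: "2*n - z = Suc k" using assms by simp
    show ?thesis
    proof (cases "z + 1 = 2*n")
      case True
      then have "sc n z = 0" unfolding sc_def by simp
      moreover have "ff n 0 = 0" unfolding ff_def cc_def by simp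
      moreover have "k = 0" using True z by arith
      ultimately show ?thesis by simp
    next
      case False
      then have s: "sc n z = z + 1" unfolding sc_def by simp
      have "cc n (z+1) = 2*n - (z+1)" using b by (intro cc_hi) simp
      moreover have "2*n - (z+1) = k" using z by simp
      ultimately have "ff n (z+1) = k" using b z ff_lo[of n "z+1"] by simp
      then show ?thesis using s by simp
    qed
  next
    case c
    then have cz: "cc n z = z" using cc_lo by simp
    then have "ff n z = n + 1 - z" using c ff_hi by simp
    then have z: "n + 1 - z = Suc k" using assms by simp
    have "op n z = z + n \<or> z = n" using c unfolding op_def by auto
    then show ?thesis
    proof
      assume o: "op n z = z + n"
      then have "z < n" unfolding op_def using c by (auto split: if_splits)
      have "cc n (z+n) = n - z" using cc_hi[of n "z+n"] by simp
      moreover have "2 * (n - z) \<le> n + 1" using c by simp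
      ultimately have "ff n (z+n) = n - z" using ff_lo by simp
      moreover have "n - z = k" using z \<open>z < n\<close> by arith
      ultimately show ?thesis using o by simp
    next
      assume "z = n"
      then have "op n z = 0" unfolding op_def by simp
      moreover have "ff n 0 = 0" unfolding ff_def cc_def by simp
      ultimately show ?thesis using z \<open>z = n\<close> by simp
    qed
  next
    case d
    then have cz: "cc n z = 2*n - z" using cc_hi by simp
    then have "ff n z = n + 1 - (2*n - z)" using d ff_hi by simp
    then have z: "n + 1 - (2*n - z) = Suc k" using assms by simp
    have o: "op n z = z - n" unfolding op_def using d by simp
    have "cc n (z-n) = z - n" using assms by (intro cc_lo) simp
    moreover have "2 * (z - n) \<le> n + 1" using d assms by simp
    ultimately have "ff n (z-n) = z - n" using ff_lo by simp
    moreover have "z - n = k" using z assms by simp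
    ultimately show ?thesis using o by simp
  qed
qed

lemma partner:
  assumes "z < 2*n" "0 < z" "n \<ge> 2"
  shows "ff n (op n (pc n z)) = ff n z \<or> ff n (op n (sc n z)) = ff n z"
proof (cases "z \<le> n")
  case True
  have p: "pc n z = z - 1" unfolding pc_def using assms by simp
  have o: "op n (z - 1) = z + n - 1" unfolding op_def using True assms by simp
  have c1: "cc n (z + n - 1) = n + 1 - z" using cc_hi[of n "z+n-1"] assms by simp
  have c2: "cc n z = z" using cc_lo True by simp
  have "ff n (z + n - 1) = min (n + 1 - z) (n + 1 - (n + 1 - z))" unfolding ff_def c1 ..
  also have "n + 1 - (n + 1 - z) = z" using True by simp
  finally have "ff n (z + n - 1) = ff n z" unfolding ff_def c2 by (simp add: min.commute)
  then show ?thesis using p o by simp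
next
  case False
  show ?thesis
  proof (cases "z + 1 = 2*n")
    case True
    then have "op n (sc n z) = n" unfolding sc_def op_def using assms by simp
    moreover have "ff n n = 1" unfolding ff_def cc_def using assms by simp
    moreover have "ff n z = 1" unfolding ff_def cc_def using assms True by simp
    ultimately show ?thesis by simp
  next
    case F2: False
    have o: "op n (sc n z) = z + 1 - n" unfolding sc_def op_def using False F2 by simp
    have c1: "cc n (z + 1 - n) = z + 1 - n" using False assms F2 by (intro cc_lo) simp
    have c2: "cc n z = 2*n - z" using cc_hi False by simp
    have e1: "n + 1 - (z + 1 - n) = 2*n - z" using False assms by simp
    have e2: "n + 1 - (2*n - z) = z + 1 - n" using False assms by simp
    have "ff n (z + 1 - n) = ff n z" unfolding ff_def c1 c2 e1 e2 by simp
    then show ?thesis using o by simp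
  qed
qed

lemma ff_zero:
  assumes "u < 2*n" "v < 2*n" "ff n (dd n u v) = 0"
  shows "v = u"
  using assms unfolding ff_def cc_def dd_def min_def by (auto split: if_splits)

lemma ff_lt: "z < 2*n \<Longrightarrow> ff n z < 2*n"
  unfolding ff_def cc_def min_def by (auto split: if_splits)

lemma ff_n2: "z < 2*n \<Longrightarrow> n = 2 \<Longrightarrow> ff n z \<le> 1"
  unfolding ff_def cc_def min_def by (auto split: if_splits)

lemma dd_self: "dd n u u = 0" unfolding dd_def by simp

lemma dd_lt: "u < 2*n \<Longrightarrow> v < 2*n \<Longrightarrow> dd n u v < 2*n"
  unfolding dd_def by auto

lemma suc_mod: "i < 2*n \<Longrightarrow> (i+1) mod (2*n) = sc n i"
  unfolding sc_def by (auto simp: mod_if)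

lemma adj_iff:
  "mobius_adj n i j \<longleftrightarrow> i < 2*n \<and> j < 2*n \<and>
     (j = sc n i \<or> i = sc n j \<or> j = i + n \<or> i = j + n)"
  unfolding mobius_adj_def using suc_mod[of i n] suc_mod[of j n] by auto

lemma adj_cases:
  assumes "mobius_adj n w v"
  shows "v = sc n w \<or> v = pc n w \<or> v = op n w"
  using assms unfolding adj_iff sc_def pc_def op_def by (auto split: if_splits)

lemma step_le:
  assumes "u < 2*n" "mobius_adj n w v"
  shows "ff n (dd n u v) \<le> ff n (dd n u w) + 1"
proof -
  have w: "w < 2*n" using assms unfolding adj_iff by auto
  have z: "dd n u w < 2*n" using dd_lt[OF assms(1) w] .
  from adj_cases[OF assms(2)] show ?thesis
    using dd_sc[OF assms(1) w] dd_pc[OF assms(1) w] dd_op[OF assms(1) w] ff_sc[OF z] ff_pc[OF z] ff_op[OF z]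
    by auto
qed

lemma walk_in: "walk adj V u v k \<Longrightarrow> u \<in> V \<and> v \<in> V"
  by (induction rule: walk.induct) auto

lemma walk_ge:
  assumes "walk (mobius_adj n) (mobius_V n) u v k"
  shows "ff n (dd n u v) \<le> k"
  using assms
proof (induction rule: walk.induct)
  case (walk0 u)
  then show ?case by (simp add: dd_self ff_def cc_def)
next
  case (walkS u w k v)
  have "u < 2*n" using walk_in[OF walkS(1)] by (auto simp: mobius_V_def)
  with walkS(3) have "ff n (dd n u v) \<le> ff n (dd n u w) + 1"
    by (intro step_le)
  with walkS show ?case by simp
qed

lemma walk_ex:
  assumes "u < 2*n"
  shows "\<forall>v<2*n. ff n (dd n u v) = k \<longrightarrow> walk (mobius_adj n) (mobius_V n) u v k"
proof (induction k)
  case 0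
  show ?case
  proof (intro allI impI)
    fix v assume "v < 2*n" "ff n (dd n u v) = 0"
    then have "v = u" using ff_zero assms by blast
    then show "walk (mobius_adj n) (mobius_V n) u v 0"
      using assms by (auto intro: walk0 simp: mobius_V_def)
  qed
next
  case (Suc k)
  show ?case
  proof (intro allI impI)
    fix v assume v: "v < 2*n" "ff n (dd n u v) = Suc k"
    have n0: "n > 0" using v by simp
    define w1 where "w1 = pc n v"
    define w2 where "w2 = sc n v"
    define w3 where "w3 = op n v"
    have w: "w1 < 2*n" "w2 < 2*n" "w3 < 2*n" using v n0 unfolding w1_def w2_def w3_def
      by (auto simp: pc_lt sc_lt op_lt)
    have a: "mobius_adj n w1 v" "mobius_adj n w2 v" "mobius_adj n w3 v"
      using v w unfolding adj_iff w1_def w2_def w3_def sc_def pc_def op_def by (auto split: if_splits)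
    have "ff n (dd n u w1) = k \<or> ff n (dd n u w2) = k \<or> ff n (dd n u w3) = k"
      using step_ex[OF dd_lt[OF assms v(1)] v(2)] unfolding w1_def w2_def w3_def
      by (simp add: dd_pc[OF assms v(1)] dd_sc[OF assms v(1)] dd_op[OF assms v(1)])
    then obtain w where "w < 2*n" "mobius_adj n w v" "ff n (dd n u w) = k"
      using w a by blast
    then have "walk (mobius_adj n) (mobius_V n) u w k" using Suc by blast
    then show "walk (mobius_adj n) (mobius_V n) u v (Suc k)"
      by (rule walkS) (use v \<open>mobius_adj n w v\<close> in \<open>auto simp: mobius_V_def\<close>)
  qed
qed

lemma gde_iff:
  assumes "u < 2*n" "v < 2*n"
  shows "graph_dist_eq (mobius_adj n) (mobius_V n) u v k \<longleftrightarrow> k = ff n (dd n u v)"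
proof
  assume h: "graph_dist_eq (mobius_adj n) (mobius_V n) u v k"
  then have "ff n (dd n u v) \<le> k" using walk_ge unfolding graph_dist_eq_def by blast
  moreover have "walk (mobius_adj n) (mobius_V n) u v (ff n (dd n u v))"
    using walk_ex[OF assms(1)] assms(2) by blast
  ultimately show "k = ff n (dd n u v)" using h unfolding graph_dist_eq_def
    by (metis le_neq_implies_less)
next
  assume "k = ff n (dd n u v)"
  then show "graph_dist_eq (mobius_adj n) (mobius_V n) u v k"
    using walk_ex[OF assms(1)] assms(2) walk_ge unfolding graph_dist_eq_def
    by (metis not_le)
qed


lemma ff_nm1: "n \<ge> 3 \<Longrightarrow> ff n (n - 1) = 2"
proof -
  assume n: "n \<ge> 3"
  have "cc n (n - 1) = n - 1" using n unfolding cc_def by simp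
  moreover have "n + 1 - (n - 1) = 2" using n by simp
  ultimately show ?thesis unfolding ff_def using n by simp
qed

lemma ff_np1: "n \<ge> 3 \<Longrightarrow> ff n (n + 1) = 2"
proof -
  assume n: "n \<ge> 3"
  have "2*n - (n+1) = n - 1" using n by simp
  then have "cc n (n + 1) = n - 1" using n unfolding cc_def by simp
  moreover have "n + 1 - (n - 1) = 2" using n by simp
  ultimately show ?thesis unfolding ff_def using n by simp
qed

lemma ff_two1:
  assumes "w < 2*n" "n \<ge> 3"
  shows "ff n (dd n (op n (sc n w)) w) = 2"
proof -
  have "dd n (op n (sc n w)) w = op n (pc n 0)"
    using assms by (simp add: dd_op1 sc_lt dd_sc1 dd_self)
  also have "pc n 0 = 2*n - 1" unfolding pc_def by simp
  also have "op n (2*n - 1) = n - 1" unfolding op_def using assms by simp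
  finally show ?thesis using ff_nm1[OF assms(2)] by simp
qed

lemma ff_two2:
  assumes "w < 2*n" "n \<ge> 3"
  shows "ff n (dd n (op n (pc n w)) w) = 2"
proof -
  have "dd n (op n (pc n w)) w = op n (sc n 0)"
    using assms by (simp add: dd_op1 pc_lt dd_pc1 dd_self)
  also have "sc n 0 = 1" unfolding sc_def using assms by simp
  also have "op n 1 = n + 1" unfolding op_def using assms by simp
  finally show ?thesis using ff_np1[OF assms(2)] by simp
qed

lemma dd_inj: "u < 2*n \<Longrightarrow> u' < 2*n \<Longrightarrow> v < 2*n \<Longrightarrow> dd n u v = dd n u' v \<Longrightarrow> u = u'"
  unfolding dd_def by (auto split: if_splits)

lemma dd_surj: "z < 2*n \<Longrightarrow> v < 2*n \<Longrightarrow>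
   dd n (if z \<le> v then v - z else v + 2*n - z) v = z \<and> (if z \<le> v then v - z else v + 2*n - z) < 2*n"
  unfolding dd_def by (auto split: if_splits)

definition sph :: "nat \<Rightarrow> nat \<Rightarrow> nat \<Rightarrow> nat set" where
  "sph n v l = {u \<in> {0..<2*n}. ff n (dd n u v) = l}"

definition sz :: "nat \<Rightarrow> nat \<Rightarrow> nat" where
  "sz n l = card {z \<in> {0..<2*n}. ff n z = l}"

lemma card_sph:
  assumes "v < 2*n"
  shows "card (sph n v l) = sz n l"
proof -
  have inj: "inj_on (\<lambda>u. dd n u v) (sph n v l)"
    using assms dd_inj unfolding sph_def inj_on_def by auto
  have "(\<lambda>u. dd n u v) ` sph n v l = {z \<in> {0..<2*n}. ff n z = l}"
  proof
    show "(\<lambda>u. dd n u v) ` sph n v l \<subseteq> {z \<in> {0..<2*n}. ff n z = l}"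
      using assms dd_lt unfolding sph_def by auto
  next
    show "{z \<in> {0..<2*n}. ff n z = l} \<subseteq> (\<lambda>u. dd n u v) ` sph n v l"
    proof
      fix z assume "z \<in> {z \<in> {0..<2*n}. ff n z = l}"
      then have z: "z < 2*n" "ff n z = l" by auto
      define u where "u = (if z \<le> v then v - z else v + 2*n - z)"
      have "dd n u v = z" "u < 2*n" using dd_surj[OF z(1) assms] unfolding u_def by auto
      then show "z \<in> (\<lambda>u. dd n u v) ` sph n v l" using z unfolding sph_def
        by (auto intro!: image_eqI[of _ _ u])
    qed
  qed
  then show ?thesis using card_image[OF inj] unfolding sz_def by simp
qed

lemma sum_sz: "(\<Sum>l<2*n. sz n l) = 2*n"
proof -
  define B where "B l = {z \<in> {0..<2*n}. ff n z = l}" for l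
  have e: "{0..<2*n} = (\<Union>l\<in>{..<2*n}. B l)"
    using ff_lt[of _ n] unfolding B_def by auto
  have "card (\<Union>l\<in>{..<2*n}. B l) = (\<Sum>l<2*n. card (B l))"
    by (rule card_UN_disjoint) (auto simp: B_def)
  then have "card {0..<2*n} = (\<Sum>l<2*n. card (B l))" using e by simp
  then show ?thesis unfolding sz_def B_def by simp
qed

lemma sz_big: "l \<ge> 2*n \<Longrightarrow> sz n l = 0"
proof -
  assume l: "l \<ge> 2*n"
  have "{z \<in> {0..<2*n}. ff n z = l} = {}" using ff_lt[of _ n] l by fastforce
  then show ?thesis unfolding sz_def by simp
qed

lemma sz_two: "n \<ge> 3 \<Longrightarrow> sz n 2 \<ge> 1"
proof -
  assume n: "n \<ge> 3"
  have "ff n (n - 1) = 2" using ff_nm1[OF n] .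
  then have "n - 1 \<in> {z \<in> {0..<2*n}. ff n z = 2}" using n by auto
  then have "card {z \<in> {0..<2*n}. ff n z = 2} \<noteq> 0" by (auto simp: card_eq_0_iff)
  then show ?thesis unfolding sz_def by linarith
qed

lemma card_UN_lt:
  assumes "finite S" "\<And>v. v \<in> S \<Longrightarrow> finite (A v)" "w \<in> S" "u \<in> S" "u \<noteq> w" "p \<in> A w" "p \<in> A u"
  shows "card (\<Union>v\<in>S. A v) < (\<Sum>v\<in>S. card (A v))"
proof -
  define R where "R = (\<Union>v\<in>S-{w}. A v)"
  have U: "(\<Union>v\<in>S. A v) = A w \<union> R" using assms(3) unfolding R_def by auto
  have fR: "finite R" using assms unfolding R_def by auto
  have fW: "finite (A w)" using assms by auto
  have pI: "p \<in> A w \<inter> R" using assms unfolding R_def by auto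
  have "card (A w \<inter> R) \<ge> 1" using pI fR by (metis One_nat_def Suc_leI card_gt_0_iff empty_iff finite_Int)
  moreover have "card (A w \<union> R) + card (A w \<inter> R) = card (A w) + card R"
    using card_Un_Int[OF fW fR] by simp
  moreover have "card R \<le> (\<Sum>v\<in>S-{w}. card (A v))" unfolding R_def by (rule card_UN_le) (use assms in auto)
  moreover have "(\<Sum>v\<in>S. card (A v)) = card (A w) + (\<Sum>v\<in>S-{w}. card (A v))"
    using sum.remove[OF assms(1) assms(3)] by simp
  ultimately show ?thesis unfolding U by linarith
qed


lemma dd_pos: "w < 2*n \<Longrightarrow> u < 2*n \<Longrightarrow> w \<noteq> u \<Longrightarrow> dd n w u > 0"
  unfolding dd_def by auto

theorem theorem3p6:
  fixes n :: nat
  assumes "n \<ge> 2"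
  shows "\<not> (\<exists>S lam. ext_irr_dom_set (mobius_adj n) (mobius_V n) S lam)"
proof
  assume "\<exists>S lam. ext_irr_dom_set (mobius_adj n) (mobius_V n) S lam"
  then obtain S lam where E: "ext_irr_dom_set (mobius_adj n) (mobius_V n) S lam" by blast
  have SV: "S \<subseteq> {0..<2*n}" and inj: "inj_on lam S" and s0: "\<exists>s\<in>S. lam s = 0"
    using E unfolding ext_irr_dom_set_def mobius_V_def by auto
  have cov: "\<And>u. u < 2*n \<Longrightarrow> \<exists>v\<in>S. ff n (dd n u v) = lam v"
  proof -
    fix u assume u: "u < 2*n"
    have "u \<in> mobius_V n" using u by (simp add: mobius_V_def)
    then obtain v where v: "v \<in> S" "graph_dist_eq (mobius_adj n) (mobius_V n) u v (lam v)"
      using E unfolding ext_irr_dom_set_def by blast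
    then have "v < 2*n" using SV by auto
    then show "\<exists>v\<in>S. ff n (dd n u v) = lam v" using v gde_iff[OF u] by metis
  qed
  have finS: "finite S" using SV finite_subset by blast
  obtain s where s: "s \<in> S" "lam s = 0" using s0 by blast
  show False
  proof (cases "n = 2")
    case True
    define x where "x = (if s = 0 then 1 else (0::nat))"
    have x: "x < 2*n" "x \<noteq> s" using True unfolding x_def by auto
    have one: "\<And>y. y < 2*n \<Longrightarrow> y \<noteq> s \<Longrightarrow> \<exists>v\<in>S. lam v = 1 \<and> ff n (dd n y v) = 1"
    proof -
      fix y assume y: "y < 2*n" "y \<noteq> s"
      obtain v where v: "v \<in> S" "ff n (dd n y v) = lam v" using cov[OF y(1)] by blast
      have vl: "v < 2*n" using v SV by auto
      have "lam v \<le> 1" using v ff_n2[OF dd_lt[OF y(1) vl] True] by simp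
      moreover have "lam v \<noteq> 0"
      proof
        assume "lam v = 0"
        then have "v = y" using ff_zero[OF y(1) vl] v by simp
        then show False using \<open>lam v = 0\<close> s inj v y unfolding inj_on_def by metis
      qed
      ultimately have "lam v = 1" by simp
      then show "\<exists>v\<in>S. lam v = 1 \<and> ff n (dd n y v) = 1" using v by auto
    qed
    obtain t where t: "t \<in> S" "lam t = 1" using one[OF x] by blast
    have tl: "t < 2*n" "t \<noteq> s" using t SV s by auto
    obtain t' where t': "t' \<in> S" "lam t' = 1" "ff n (dd n t t') = 1" using one[OF tl] by blast
    have "t' = t" using t t' inj unfolding inj_on_def by metis
    then show False using t' by (simp add: dd_self ff_def cc_def)
  next
    case False
    then have n3: "n \<ge> 3" using assms by simp
    define A where "A v = sph n v (lam v)" for v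
    have finA: "\<And>v. finite (A v)" unfolding A_def sph_def by auto
    have "{0..<2*n} \<subseteq> (\<Union>v\<in>S. A v)"
      using cov unfolding A_def sph_def by fastforce
    then have c1: "2*n \<le> card (\<Union>v\<in>S. A v)"
      using card_mono[of "\<Union>v\<in>S. A v" "{0..<2*n}"] finS finA by auto
    define L where "L = lam ` S"
    have finL: "finite L" using finS unfolding L_def by auto
    have "(\<Sum>v\<in>S. card (A v)) = (\<Sum>v\<in>S. sz n (lam v))"
      using card_sph SV unfolding A_def by (intro sum.cong) auto
    also have "\<dots> = (\<Sum>l\<in>L. sz n l)"
      unfolding L_def using sum.reindex[OF inj, of "sz n"] by simp
    also have "\<dots> = (\<Sum>l\<in>L \<inter> {..<2*n}. sz n l)"
      by (rule sum.mono_neutral_right) (use finL in auto, metis neq0_conv not_le sz_big)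
    finally have c2: "(\<Sum>v\<in>S. card (A v)) = (\<Sum>l\<in>L \<inter> {..<2*n}. sz n l)" .
    have c3: "(\<Sum>l\<in>L \<inter> {..<2*n}. sz n l) \<le> 2*n"
      using sum_mono2[of "{..<2*n}" "L \<inter> {..<2*n}" "sz n"] sum_sz by auto
    have c4: "card (\<Union>v\<in>S. A v) \<le> (\<Sum>v\<in>S. card (A v))"
      by (rule card_UN_le) (use finS finA in auto)
    show False
    proof (cases "2 \<in> L")
      case False
      have "(\<Sum>l\<in>L \<inter> {..<2*n}. sz n l) \<le> (\<Sum>l\<in>{..<2*n}-{2}. sz n l)"
        using False by (intro sum_mono2) auto
      also have "\<dots> = (\<Sum>l<2*n. sz n l) - sz n 2"
        using n3 by (subst sum_diff1_nat) auto
      finally have "(\<Sum>l\<in>L \<inter> {..<2*n}. sz n l) < 2*n"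
        using sz_two[OF n3] n3 sum_sz[of n] by linarith
      then show False using c1 c2 c4 by linarith
    next
      case True
      then obtain w where w: "w \<in> S" "lam w = 2" unfolding L_def by auto
      have wl: "w < 2*n" using w SV by auto
      obtain u where u: "u \<in> S" "ff n (dd n w u) = lam u" using cov[OF wl] by blast
      have ul: "u < 2*n" using u SV by auto
      have uw: "u \<noteq> w" using u w by (auto simp: dd_self ff_def cc_def)
      define z where "z = dd n w u"
      have z: "z < 2*n" "0 < z" using dd_lt[OF wl ul] dd_pos[OF wl ul] uw unfolding z_def by auto
      obtain p where p: "p \<in> A w" "p \<in> A u"
      proof (cases "ff n (op n (pc n z)) = ff n z")
        case True
        define p where "p = op n (sc n w)"
        have "p < 2*n" unfolding p_def using wl by (simp add: op_lt sc_lt)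
        moreover have "ff n (dd n p u) = lam u"
          unfolding p_def using True u wl ul unfolding z_def by (simp add: dd_op1 sc_lt dd_sc1)
        moreover have "ff n (dd n p w) = lam w" unfolding p_def using ff_two1[OF wl n3] w by simp
        ultimately show ?thesis using that unfolding A_def sph_def by auto
      next
        case False
        then have F: "ff n (op n (sc n z)) = ff n z" using partner[OF z assms] by blast
        define p where "p = op n (pc n w)"
        have "p < 2*n" unfolding p_def using wl by (simp add: op_lt pc_lt)
        moreover have "ff n (dd n p u) = lam u"
          unfolding p_def using F u wl ul unfolding z_def by (simp add: dd_op1 pc_lt dd_pc1)
        moreover have "ff n (dd n p w) = lam w" unfolding p_def using ff_two2[OF wl n3] w by simp
        ultimately show ?thesis using that unfolding A_def sph_def by auto
      qed
      have "card (\<Union>v\<in>S. A v) < (\<Sum>v\<in>S. card (A v))"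
        by (rule card_UN_lt[OF finS _ w(1) u(1) uw p]) (use finA in auto)
      then show False using c1 c2 c3 by linarith
    qed
  qed
qed

end
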